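(* Let $G = (V, E, \ell)$ be a graph with positive edge lengths, let $A \subseteq V$ be nonempty, and let $p: V \to A$ be a pivot function for $A$, i.e., for every $v\in V$, $p(v)$ is a vertex of $A$ nearest to $v$ (ties broken arbitrarily but consistently). Then for any $u, v \in V$ with $v \notin B_G(u, p(u))$, we have $\mathrm{dist}_G(p(u), p(v)) \leq 4 \cdot \mathrm{dist}_G(u, v)$.
   Context: $\mathrm{dist}_G$ is the shortest-path distance in $G$ with respect to $\ell$. For vertices $u,w$, $B_G(u, w) = \{x \in V: \mathrm{dist}_G(u, x) < \mathrm{dist}_G(u, w)\}$. *)

theory Defs
  imports "HOL-Library.Extended_Real"
begin

definition is_walk :: "'a set \<Rightarrow> 'a set set \<Rightarrow> 'a list \<Rightarrow> 'a \<Rightarrow> 'a \<Rightarrow> bool" where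
  "is_walk V E xs u v \<longleftrightarrow> xs \<noteq> [] \<and> hd xs = u \<and> last xs = v \<and> set xs \<subseteq> V \<and>
     (\<forall>i. Suc i < length xs \<longrightarrow> {xs ! i, xs ! Suc i} \<in> E)"

definition walk_length :: "('a set \<Rightarrow> real) \<Rightarrow> 'a list \<Rightarrow> real" where
  "walk_length l xs = (\<Sum>i<length xs - 1. l {xs ! i, xs ! Suc i})"

text \<open>Shortest-path distance (\<infinity> if v is unreachable from u).\<close>
definition gdist :: "'a set \<Rightarrow> 'a set set \<Rightarrow> ('a set \<Rightarrow> real) \<Rightarrow> 'a \<Rightarrow> 'a \<Rightarrow> ereal" where
  "gdist V E l u v = (INF xs \<in> {xs. is_walk V E xs u v}. ereal (walk_length l xs))"

definition wgraph :: "'a set \<Rightarrow> 'a set set \<Rightarrow> ('a set \<Rightarrow> real) \<Rightarrow> bool" where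
  "wgraph V E l \<longleftrightarrow> finite V \<and> (\<forall>e\<in>E. e \<subseteq> V \<and> card e = 2) \<and> (\<forall>e\<in>E. l e > 0)"

definition gball :: "'a set \<Rightarrow> 'a set set \<Rightarrow> ('a set \<Rightarrow> real) \<Rightarrow> 'a \<Rightarrow> 'a \<Rightarrow> 'a set" where
  "gball V E l u w = {x \<in> V. gdist V E l u x < gdist V E l u w}"

definition is_pivot :: "'a set \<Rightarrow> 'a set set \<Rightarrow> ('a set \<Rightarrow> real) \<Rightarrow> 'a set \<Rightarrow> ('a \<Rightarrow> 'a) \<Rightarrow> bool" where
  "is_pivot V E l A p \<longleftrightarrow> (\<forall>v\<in>V. p v \<in> A \<and> (\<forall>a\<in>A. gdist V E l v (p v) \<le> gdist V E l v a))"

end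

theory Submission
  imports Defs
begin

fun chn :: "'a set set \<Rightarrow> 'a list \<Rightarrow> bool" where
  "chn E (a # b # xs) = ({a, b} \<in> E \<and> chn E (b # xs))"
| "chn E _ = True"

fun wl :: "('a set \<Rightarrow> real) \<Rightarrow> 'a list \<Rightarrow> real" where
  "wl l (a # b # xs) = l {a, b} + wl l (b # xs)"
| "wl l _ = 0"

lemma chn_iff: "(\<forall>i. Suc i < length xs \<longrightarrow> {xs ! i, xs ! Suc i} \<in> E) \<longleftrightarrow> chn E xs"
proof (induction E xs rule: chn.induct)
  case (1 E a b xs)
  have "(\<forall>i. Suc i < length (a # b # xs) \<longrightarrow> {(a # b # xs) ! i, (a # b # xs) ! Suc i} \<in> E)
     \<longleftrightarrow> {a, b} \<in> E \<and> (\<forall>i. Suc i < length (b # xs) \<longrightarrow> {(b # xs) ! i, (b # xs) ! Suc i} \<in> E)"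
    (is "?L \<longleftrightarrow> ?R")
  proof
    assume ?L
    then show ?R by (metis Suc_less_eq length_Cons nth_Cons_0 nth_Cons_Suc zero_less_Suc)
  next
    assume R: ?R
    show ?L
    proof (intro allI impI)
      fix i assume "Suc i < length (a # b # xs)"
      then show "{(a # b # xs) ! i, (a # b # xs) ! Suc i} \<in> E"
        using R by (cases i) auto
    qed
  qed
  then show ?case using 1 by simp
qed auto

lemma wl_eq: "walk_length l xs = wl l xs"
proof (induction l xs rule: wl.induct)
  case (1 l a b xs)
  have "walk_length l (a # b # xs) = (\<Sum>i<Suc (length xs). l {(a#b#xs) ! i, (a#b#xs) ! Suc i})"
    by (simp add: walk_length_def)
  also have "\<dots> = l {a, b} + (\<Sum>i<length xs. l {(b#xs) ! i, (b#xs) ! Suc i})"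
    by (subst sum.lessThan_Suc_shift) simp
  also have "\<dots> = l {a, b} + walk_length l (b # xs)"
    by (simp add: walk_length_def)
  finally show ?case using 1 by simp
qed (auto simp: walk_length_def)

lemma chn_app: "xs \<noteq> [] \<Longrightarrow> last xs = hd ys \<Longrightarrow> chn E xs \<Longrightarrow> chn E ys \<Longrightarrow> chn E (xs @ tl ys)"
proof (induction xs)
  case (Cons a xs)
  then show ?case by (cases xs; cases ys; cases "tl ys") auto
qed auto

lemma wl_app: "xs \<noteq> [] \<Longrightarrow> last xs = hd ys \<Longrightarrow> wl l (xs @ tl ys) = wl l xs + wl l ys"
proof (induction xs)
  case (Cons a xs)
  then show ?case by (cases xs; cases ys; cases "tl ys") auto
qed auto

lemma rev_props: "chn E xs \<Longrightarrow> chn E (rev xs) \<and> wl l (rev xs) = wl l xs"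
proof (induction E xs rule: chn.induct)
  case (1 E a b xs)
  have e: "rev (a # b # xs) = rev (b # xs) @ tl [b, a]" by simp
  have c: "chn E [b, a]" using 1 by (simp add: insert_commute)
  show ?case using 1 chn_app[of "rev (b # xs)" "[b,a]" E] wl_app[of "rev (b # xs)" "[b,a]" l] c
    by (simp only: e) (auto simp: insert_commute last_rev)
qed auto

lemma walk_iff: "is_walk V E xs u v \<longleftrightarrow> xs \<noteq> [] \<and> hd xs = u \<and> last xs = v \<and> set xs \<subseteq> V \<and> chn E xs"
  unfolding is_walk_def chn_iff ..

lemma gdist_alt: "gdist V E l u v = (INF xs \<in> {xs. is_walk V E xs u v}. ereal (wl l xs))"
  unfolding gdist_def wl_eq ..

lemma wl_nonneg: "\<forall>e\<in>E. l e > 0 \<Longrightarrow> chn E xs \<Longrightarrow> wl l xs \<ge> 0"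
proof (induction l xs rule: wl.induct)
  case (1 l a b xs)
  then show ?case by (simp add: add_nonneg_nonneg less_imp_le)
qed auto

lemma gdist_nonneg: "wgraph V E l \<Longrightarrow> gdist V E l u v \<ge> 0"
  unfolding gdist_alt
  by (rule INF_greatest) (auto simp: wgraph_def walk_iff intro: wl_nonneg)

lemma gdist_sym: "gdist V E l u v \<le> gdist V E l v u"
  unfolding gdist_alt
proof (rule INF_mono)
  fix ys assume "ys \<in> {xs. is_walk V E xs v u}"
  then have w: "is_walk V E ys v u" by simp
  then have "chn E ys" by (simp add: walk_iff)
  from rev_props[OF this, of l] w have "is_walk V E (rev ys) u v" "wl l (rev ys) = wl l ys"
    by (auto simp: walk_iff hd_rev last_rev)
  then show "\<exists>n\<in>{xs. is_walk V E xs u v}. ereal (wl l n) \<le> ereal (wl l ys)" by force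
qed

lemma gdist_sym_eq: "gdist V E l u v = gdist V E l v u"
  using gdist_sym by (metis antisym)

lemma gdist_tri:
  assumes g: "wgraph V E l"
  shows "gdist V E l x z \<le> gdist V E l x y + gdist V E l y z"
proof -
  define S where "S = {xs. is_walk V E xs x y}"
  define T where "T = {xs. is_walk V E xs y z}"
  have pos: "\<forall>e\<in>E. l e > 0" using g by (simp add: wgraph_def)
  have nnS: "\<And>a. a \<in> S \<Longrightarrow> wl l a \<ge> 0" using pos by (auto simp: S_def walk_iff intro: wl_nonneg)
  have nnT: "\<And>a. a \<in> T \<Longrightarrow> wl l a \<ge> 0" using pos by (auto simp: T_def walk_iff intro: wl_nonneg)
  have dxy: "gdist V E l x y = (INF a\<in>S. ereal (wl l a))" unfolding S_def gdist_alt ..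
  have dyz: "gdist V E l y z = (INF a\<in>T. ereal (wl l a))" unfolding T_def gdist_alt ..
  have n1: "gdist V E l x y \<ge> 0" "gdist V E l y z \<ge> 0" using gdist_nonneg[OF g] by auto
  show ?thesis
  proof (cases "S = {} \<or> T = {}")
    case True
    then have "gdist V E l x y = \<infinity> \<or> gdist V E l y z = \<infinity>"
      using dxy dyz by (auto simp: top_ereal_def)
    then show ?thesis using n1 by auto
  next
    case False
    have "gdist V E l x z \<le> (INF a\<in>S. INF b\<in>T. ereal (wl l a) + ereal (wl l b))"
    proof (intro INF_greatest)
      fix a b assume a: "a \<in> S" and b: "b \<in> T"
      have wa: "is_walk V E a x y" and wb: "is_walk V E b y z" using a b by (auto simp: S_def T_def)
      have "is_walk V E (a @ tl b) x z"
        using wa wb chn_app[of a b E] by (cases b) (auto simp: walk_iff)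
      moreover have "wl l (a @ tl b) = wl l a + wl l b"
        using wa wb by (intro wl_app) (auto simp: walk_iff)
      ultimately show "gdist V E l x z \<le> ereal (wl l a) + ereal (wl l b)"
        unfolding gdist_alt by (metis (mono_tags, lifting) INF_lower mem_Collect_eq plus_ereal.simps(1))
    qed
    also have "\<dots> = (INF a\<in>S. ereal (wl l a) + (INF b\<in>T. ereal (wl l b)))"
      using False nnT by (intro INF_cong refl INF_ereal_add_right) auto
    also have "\<dots> = (INF a\<in>S. ereal (wl l a)) + (INF b\<in>T. ereal (wl l b))"
      using False nnS n1 dyz by (intro INF_ereal_add_left) auto
    finally show ?thesis using dxy dyz by simp
  qed
qed

theorem claim4p2:
  assumes "wgraph V E l"
    and "A \<subseteq> V" and "A \<noteq> {}"
    and "is_pivot V E l A p"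
    and "u \<in> V" and "v \<in> V"
    and "v \<notin> gball V E l u (p u)"
  shows "gdist V E l (p u) (p v) \<le> 4 * gdist V E l u v"
proof -
  define d where "d = gdist V E l u v"
  have d0: "d \<ge> 0" using gdist_nonneg[OF assms(1)] d_def by simp
  have h1: "gdist V E l u (p u) \<le> d" using assms(6,7) by (auto simp: gball_def d_def)
  have pu: "p u \<in> A" using assms(4,5) by (simp add: is_pivot_def)
  have h2: "gdist V E l v (p v) \<le> gdist V E l v (p u)" using assms(4,6) pu by (simp add: is_pivot_def)
  also have "\<dots> \<le> gdist V E l v u + gdist V E l u (p u)" by (rule gdist_tri[OF assms(1)])
  also have "\<dots> \<le> d + d" using h1 gdist_sym_eq[of V E l v u] d_def by (simp add: add_mono)
  finally have h3: "gdist V E l v (p v) \<le> d + d" .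
  have "gdist V E l (p u) (p v) \<le> gdist V E l (p u) v + gdist V E l v (p v)" by (rule gdist_tri[OF assms(1)])
  also have "\<dots> \<le> (gdist V E l (p u) u + gdist V E l u v) + gdist V E l v (p v)"
    by (intro add_mono gdist_tri[OF assms(1)] order_refl)
  also have "\<dots> \<le> (d + d) + (d + d)"
    using h1 h3 gdist_sym_eq[of V E l "p u" u] d_def by (intro add_mono) auto
  also have "\<dots> = 4 * d" using d0 by (cases d) auto
  finally show ?thesis by (simp add: d_def)
qed

end
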